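(* Let $A,B\subseteq\Sigma^+$ (not necessarily finite) and $k\ge1$. The term $\langle A,B\rangle$ has a deduction tree of size $k$ if and only if there is a formula $\phi\in\mathrm{LTL}[\mathsf{X},\mathsf{wX},\mathsf{F},\mathsf{G}]$ separating $A$ from $B$ with $\mathrm{size}(\phi)=k$.
   Context: Let $AP$ be a finite set of atomic propositions and $\Sigma=2^{AP}$. Formulae of $\mathrm{LTL}[\mathsf{X},\mathsf{wX},\mathsf{F},\mathsf{G}]$ are generated by $\phi::=p\mid\neg p\mid\phi\lor\phi\mid\phi\land\phi\mid\mathsf{X}\phi\mid\mathsf{wX}\phi\mid\mathsf{F}\phi\mid\mathsf{G}\phi$ ($p\in AP$), interpreted on $\sigma\in\Sigma^+$ at positions $0\le i<|\sigma|$: literals/Booleans as usual; $\mathsf{X}\phi$: $i+1<|\sigma|$ and $\phi$ at $i+1$; $\mathsf{wX}\phi$: $i+1=|\sigma|$ or $\phi$ at $i+1$; $\mathsf{F}\phi$/$\mathsf{G}\phi$: $\phi$ at some/every $j$ with $i\le j<|\sigma|$. Size: literals 1, unary operators add 1, binary connectives sum sizes plus 1. For $C\subseteq\Sigma^+$, write $C\models\phi$ if $\sigma,0\models\phi$ for all $\sigma\in C$ and $C\perp\phi$ if $\sigma,0\not\models\phi$ for all $\sigma\in C$; $\phi$ separates $A$ from $B$ if $A\models\phi$ and $B\perp\phi$. Notation: for $\sigma=w_0\cdots w_m$ and $j\le m$, $\sigma^{(j)}=w_j\cdots w_m$; $A^{\mathsf X}=\{\sigma^{(1)}:\sigma\in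 A,|\sigma|\ge2\}$; $A^{\mathsf G}=\{\sigma^{(j)}:\sigma\in A, 0\le j<|\sigma|\}$; a future point for $A$ is a map $f:A\to\mathbb N$ with $f(\sigma)<|\sigma|$ for all $\sigma\in A$, and then $A^f=\{\sigma^{(f(\sigma))}:\sigma\in A\}$. Proof system: terms are pairs $\langle A,B\rangle$ with $A,B\subseteq\Sigma^+$; the rules (conclusion from hypotheses) are: Atomic: $\langle A,B\rangle$ with no hypotheses, provided $A\models\alpha$ and $B\perp\alpha$ for some literal $\alpha$; Or: $\langle A_1\uplus A_2,B\rangle$ from $\langle A_1,B\rangle$ and $\langle A_2,B\rangle$ ($\uplus$ = union of disjoint sets); And: $\langle A,B_1\uplus B_2\rangle$ from $\langle A,B_1\rangle$ and $\langle A,B_2\rangle$; Next: $\langle A,B\rangle$ from $\langle A^{\mathsf X},B^{\mathsf X}\rangle$ provided $|A^{\mathsf X}|=|A|$; WeakNext: $\langle A,B\rangle$ from $\langle A^{\mathsf X},B^{\mathsf X}\rangle$ provided $|B^{\mathsf X}|=|B|$; Future: $\langle A,B\rangle$ from $\langle A^f,B^{\mathsf G}\rangle$ for some future point $f$ for $A$; Globally: $\langle A,B\rangle$ from $\langle A^{\mathsf G},B^f\rangle$ for some future point $f$ for $B$. A deduction tree for $\langle A,B\rangle$ is a finite tree of rule applications with root conclusion $\langle A,B\rangle$, in which every hypothesis is the conclusion of a rule application (so all branches end in Atomic); its size is the number of rule applications in it. *)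

theory Defs
  imports Main
begin

text \<open>Atomic propositions: a finite type 'a. Letters: 'a set (= 2^AP).
  Finite words: 'a set list, required to be nonempty.\<close>

datatype 'a ltl =
    Lit 'a
  | NLit 'a
  | Or "'a ltl" "'a ltl"
  | And "'a ltl" "'a ltl"
  | Nxt "'a ltl"
  | WNxt "'a ltl"
  | Fut "'a ltl"
  | Glob "'a ltl"

fun holds :: "'a set list \<Rightarrow> nat \<Rightarrow> 'a ltl \<Rightarrow> bool" where
  "holds w i (Lit p) = (p \<in> w ! i)"
| "holds w i (NLit p) = (p \<notin> w ! i)"
| "holds w i (Or \<phi> \<psi>) = (holds w i \<phi> \<or> holds w i \<psi>)"
| "holds w i (And \<phi> \<psi>) = (holds w i \<phi> \<and> holds w i \<psi>)"
| "holds w i (Nxt \<phi>) = (i + 1 < length w \<and> holds w (i + 1) \<phi>)"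
| "holds w i (WNxt \<phi>) = (i + 1 = length w \<or> holds w (i + 1) \<phi>)"
| "holds w i (Fut \<phi>) = (\<exists>j. i \<le> j \<and> j < length w \<and> holds w j \<phi>)"
| "holds w i (Glob \<phi>) = (\<forall>j. i \<le> j \<and> j < length w \<longrightarrow> holds w j \<phi>)"

fun fsize :: "'a ltl \<Rightarrow> nat" where
  "fsize (Lit p) = 1"
| "fsize (NLit p) = 1"
| "fsize (Or \<phi> \<psi>) = fsize \<phi> + fsize \<psi> + 1"
| "fsize (And \<phi> \<psi>) = fsize \<phi> + fsize \<psi> + 1"
| "fsize (Nxt \<phi>) = fsize \<phi> + 1"
| "fsize (WNxt \<phi>) = fsize \<phi> + 1"
| "fsize (Fut \<phi>) = fsize \<phi> + 1"
| "fsize (Glob \<phi>) = fsize \<phi> + 1"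

definition models :: "'a set list set \<Rightarrow> 'a ltl \<Rightarrow> bool" where
  "models C \<phi> \<longleftrightarrow> (\<forall>\<sigma>\<in>C. holds \<sigma> 0 \<phi>)"

definition perp :: "'a set list set \<Rightarrow> 'a ltl \<Rightarrow> bool" where
  "perp C \<phi> \<longleftrightarrow> (\<forall>\<sigma>\<in>C. \<not> holds \<sigma> 0 \<phi>)"

definition separates :: "'a ltl \<Rightarrow> 'a set list set \<Rightarrow> 'a set list set \<Rightarrow> bool" where
  "separates \<phi> A B \<longleftrightarrow> models A \<phi> \<and> perp B \<phi>"

definition is_literal :: "'a ltl \<Rightarrow> bool" where
  "is_literal \<alpha> \<longleftrightarrow> (\<exists>p. \<alpha> = Lit p \<or> \<alpha> = NLit p)"

text \<open>sigma^(j) is drop j sigma.\<close>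

definition nextset :: "'a set list set \<Rightarrow> 'a set list set" where
  "nextset A = {drop 1 \<sigma> | \<sigma>. \<sigma> \<in> A \<and> length \<sigma> \<ge> 2}"

definition globset :: "'a set list set \<Rightarrow> 'a set list set" where
  "globset A = {drop j \<sigma> | \<sigma> j. \<sigma> \<in> A \<and> j < length \<sigma>}"

definition future_point :: "('a set list \<Rightarrow> nat) \<Rightarrow> 'a set list set \<Rightarrow> bool" where
  "future_point f A \<longleftrightarrow> (\<forall>\<sigma>\<in>A. f \<sigma> < length \<sigma>)"

definition futset :: "'a set list set \<Rightarrow> ('a set list \<Rightarrow> nat) \<Rightarrow> 'a set list set" where
  "futset A f = {drop (f \<sigma>) \<sigma> | \<sigma>. \<sigma> \<in> A}"

text \<open>The side condition |A^X| = |A| of the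
  Next rule (resp. |B^X| = |B| of WeakNext) is read as: no word of A (resp. B)
  is lost when passing to A^X, i.e. every word of A has length at least 2.\<close>

inductive ded :: "'a set list set \<Rightarrow> 'a set list set \<Rightarrow> nat \<Rightarrow> bool" where
  atomic: "is_literal \<alpha> \<Longrightarrow> models A \<alpha> \<Longrightarrow> perp B \<alpha> \<Longrightarrow> ded A B 1"
| orR: "A1 \<inter> A2 = {} \<Longrightarrow> ded A1 B k1 \<Longrightarrow> ded A2 B k2 \<Longrightarrow> ded (A1 \<union> A2) B (k1 + k2 + 1)"
| andR: "B1 \<inter> B2 = {} \<Longrightarrow> ded A B1 k1 \<Longrightarrow> ded A B2 k2 \<Longrightarrow> ded A (B1 \<union> B2) (k1 + k2 + 1)"
| nextR: "\<forall>\<sigma>\<in>A. length \<sigma> \<ge> 2 \<Longrightarrow> ded (nextset A) (nextset B) k \<Longrightarrow> ded A B (k + 1)"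
| wnext: "\<forall>\<sigma>\<in>B. length \<sigma> \<ge> 2 \<Longrightarrow> ded (nextset A) (nextset B) k \<Longrightarrow> ded A B (k + 1)"
| future: "future_point f A \<Longrightarrow> ded (futset A f) (globset B) k \<Longrightarrow> ded A B (k + 1)"
| globally: "future_point f B \<Longrightarrow> ded (globset A) (futset B f) k \<Longrightarrow> ded A B (k + 1)"

end

theory Submission
  imports Defs
begin

lemma holds_drop:
  "i + j < length w \<Longrightarrow> holds (drop j w) i \<phi> = holds w (i + j) \<phi>"
proof (induction \<phi> arbitrary: i)
  case (Nxt \<phi>)
  then show ?case by (cases "i + 1 + j < length w") (auto simp: add.commute add.left_commute)
next
  case (WNxt \<phi>)
  then show ?case by (cases "i + 1 + j < length w") (auto simp: add.commute add.left_commute)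
next
  case (Fut \<phi>)
  show ?case
  proof
    assume "holds (drop j w) i (Fut \<phi>)"
    then obtain m where "i \<le> m" "m < length w - j" "holds (drop j w) m \<phi>" by auto
    with Fut.IH[of m] show "holds w (i + j) (Fut \<phi>)" by (auto intro!: exI[of _ "m + j"])
  next
    assume "holds w (i + j) (Fut \<phi>)"
    then obtain m where "i + j \<le> m" "m < length w" "holds w m \<phi>" by auto
    with Fut.IH[of "m - j"] show "holds (drop j w) i (Fut \<phi>)" by (auto intro!: exI[of _ "m - j"])
  qed
next
  case (Glob \<phi>)
  show ?case
  proof
    assume H: "holds (drop j w) i (Glob \<phi>)"
    show "holds w (i + j) (Glob \<phi>)"
    proof (simp, intro allI impI)
      fix m assume "i + j \<le> m \<and> m < length w"
      then have "i \<le> m - j" "m - j < length w - j" "m - j + j = m" by auto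
      with H have "holds (drop j w) (m - j) \<phi>" by simp
      with Glob.IH[of "m - j"] \<open>m - j + j = m\<close> \<open>m - j < length w - j\<close>
      show "holds w m \<phi>" by simp
    qed
  next
    assume H: "holds w (i + j) (Glob \<phi>)"
    show "holds (drop j w) i (Glob \<phi>)"
    proof (simp, intro allI impI)
      fix m assume "i \<le> m \<and> m < length w - j"
      with H Glob.IH[of m] show "holds (drop j w) m \<phi>" by auto
    qed
  qed
qed (auto simp: add.commute)

lemma holds_drop0:
  "j < length w \<Longrightarrow> holds (drop j w) 0 \<phi> = holds w j \<phi>"
  using holds_drop[of 0 j w \<phi>] by simp

lemma sound:
  "ded A B k \<Longrightarrow> \<forall>\<sigma>\<in>A. \<sigma> \<noteq> [] \<Longrightarrow> \<forall>\<sigma>\<in>B. \<sigma> \<noteq> [] \<Longrightarrow> \<exists>\<phi>. separates \<phi> A B \<and> fsize \<phi> = k"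
proof (induction rule: ded.induct)
  case (atomic \<alpha> A B)
  then show ?case by (auto simp: is_literal_def separates_def)
next
  case (orR A1 A2 B k1 k2)
  then obtain \<phi>1 \<phi>2 where "separates \<phi>1 A1 B" "fsize \<phi>1 = k1" "separates \<phi>2 A2 B" "fsize \<phi>2 = k2"
    by auto
  then show ?case by (intro exI[of _ "Or \<phi>1 \<phi>2"]) (auto simp: separates_def models_def perp_def)
next
  case (andR B1 B2 A k1 k2)
  then obtain \<phi>1 \<phi>2 where "separates \<phi>1 A B1" "fsize \<phi>1 = k1" "separates \<phi>2 A B2" "fsize \<phi>2 = k2"
    by auto
  then show ?case by (intro exI[of _ "And \<phi>1 \<phi>2"]) (auto simp: separates_def models_def perp_def)
next
  case (nextR A B k)
  have "\<forall>\<sigma>\<in>nextset A. \<sigma> \<noteq> []" "\<forall>\<sigma>\<in>nextset B. \<sigma> \<noteq> []" by (auto simp: nextset_def)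
  with nextR obtain \<phi> where S: "separates \<phi> (nextset A) (nextset B)" "fsize \<phi> = k" by auto
  have "models A (Nxt \<phi>)"
    unfolding models_def
  proof
    fix \<sigma> assume "\<sigma> \<in> A"
    with nextR(1) have "length \<sigma> \<ge> 2" "drop 1 \<sigma> \<in> nextset A" by (auto simp: nextset_def)
    with S show "holds \<sigma> 0 (Nxt \<phi>)" by (auto simp: separates_def models_def holds_drop0)
  qed
  moreover have "perp B (Nxt \<phi>)"
    unfolding perp_def
  proof
    fix \<sigma> assume "\<sigma> \<in> B"
    show "\<not> holds \<sigma> 0 (Nxt \<phi>)"
    proof (cases "length \<sigma> \<ge> 2")
      case True
      with \<open>\<sigma> \<in> B\<close> have "drop 1 \<sigma> \<in> nextset B" by (auto simp: nextset_def)
      with S True show ?thesis by (auto simp: separates_def perp_def holds_drop0)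
    qed (auto simp: add.commute)
  qed
  ultimately show ?case using S by (intro exI[of _ "Nxt \<phi>"]) (auto simp: separates_def)
next
  case (wnext B A k)
  have "\<forall>\<sigma>\<in>nextset A. \<sigma> \<noteq> []" "\<forall>\<sigma>\<in>nextset B. \<sigma> \<noteq> []" by (auto simp: nextset_def)
  with wnext obtain \<phi> where S: "separates \<phi> (nextset A) (nextset B)" "fsize \<phi> = k" by auto
  have "perp B (WNxt \<phi>)"
    unfolding perp_def
  proof
    fix \<sigma> assume "\<sigma> \<in> B"
    with wnext(1) have "length \<sigma> \<ge> 2" "drop 1 \<sigma> \<in> nextset B" by (auto simp: nextset_def)
    with S show "\<not> holds \<sigma> 0 (WNxt \<phi>)" by (auto simp: separates_def perp_def holds_drop0)
  qed
  moreover have "models A (WNxt \<phi>)"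
    unfolding models_def
  proof
    fix \<sigma> assume "\<sigma> \<in> A"
    show "holds \<sigma> 0 (WNxt \<phi>)"
    proof (cases "length \<sigma> \<ge> 2")
      case True
      with \<open>\<sigma> \<in> A\<close> have "drop 1 \<sigma> \<in> nextset A" by (auto simp: nextset_def)
      with S True show ?thesis by (auto simp: separates_def models_def holds_drop0)
    next
      case False
      moreover have "\<sigma> \<noteq> []" using \<open>\<sigma> \<in> A\<close> wnext.prems(1) by auto
      then have "0 < length \<sigma>" by simp
      with False have "length \<sigma> = 1" by linarith
      then show ?thesis by simp
    qed
  qed
  ultimately show ?case using S by (intro exI[of _ "WNxt \<phi>"]) (auto simp: separates_def)
next
  case (future f A B k)
  have "\<forall>\<sigma>\<in>futset A f. \<sigma> \<noteq> []" using future(1) by (auto simp: futset_def future_point_def)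
  moreover have "\<forall>\<sigma>\<in>globset B. \<sigma> \<noteq> []" by (auto simp: globset_def)
  ultimately obtain \<phi> where S: "separates \<phi> (futset A f) (globset B)" "fsize \<phi> = k"
    using future by auto
  have "models A (Fut \<phi>)"
    unfolding models_def
  proof
    fix \<sigma> assume "\<sigma> \<in> A"
    with future(1) have "f \<sigma> < length \<sigma>" "drop (f \<sigma>) \<sigma> \<in> futset A f"
      by (auto simp: futset_def future_point_def)
    moreover from this(2) S have "holds (drop (f \<sigma>) \<sigma>) 0 \<phi>" by (auto simp: separates_def models_def)
    ultimately have "holds \<sigma> (f \<sigma>) \<phi>" by (simp add: holds_drop0)
    with \<open>f \<sigma> < length \<sigma>\<close> show "holds \<sigma> 0 (Fut \<phi>)" by auto
  qed
  moreover have "perp B (Fut \<phi>)"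
    unfolding perp_def
  proof
    fix \<sigma> assume "\<sigma> \<in> B"
    then have "\<And>j. j < length \<sigma> \<Longrightarrow> drop j \<sigma> \<in> globset B" by (auto simp: globset_def)
    note G = this
    show "\<not> holds \<sigma> 0 (Fut \<phi>)"
    proof
      assume "holds \<sigma> 0 (Fut \<phi>)"
      then obtain j where j: "j < length \<sigma>" "holds \<sigma> j \<phi>" by auto
      then have "holds (drop j \<sigma>) 0 \<phi>" by (simp add: holds_drop0)
      with G[OF j(1)] S show False by (auto simp: separates_def perp_def)
    qed
  qed
  ultimately show ?case using S by (intro exI[of _ "Fut \<phi>"]) (auto simp: separates_def)
next
  case (globally f B A k)
  have "\<forall>\<sigma>\<in>futset B f. \<sigma> \<noteq> []" using globally(1) by (auto simp: futset_def future_point_def)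
  moreover have "\<forall>\<sigma>\<in>globset A. \<sigma> \<noteq> []" by (auto simp: globset_def)
  ultimately obtain \<phi> where S: "separates \<phi> (globset A) (futset B f)" "fsize \<phi> = k"
    using globally by auto
  have "perp B (Glob \<phi>)"
    unfolding perp_def
  proof
    fix \<sigma> assume "\<sigma> \<in> B"
    with globally(1) have "f \<sigma> < length \<sigma>" "drop (f \<sigma>) \<sigma> \<in> futset B f"
      by (auto simp: futset_def future_point_def)
    moreover from this(2) S have "\<not> holds (drop (f \<sigma>) \<sigma>) 0 \<phi>" by (auto simp: separates_def perp_def)
    ultimately have "\<not> holds \<sigma> (f \<sigma>) \<phi>" by (simp add: holds_drop0)
    with \<open>f \<sigma> < length \<sigma>\<close> show "\<not> holds \<sigma> 0 (Glob \<phi>)" by auto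
  qed
  moreover have "models A (Glob \<phi>)"
    unfolding models_def
  proof
    fix \<sigma> assume "\<sigma> \<in> A"
    then have "\<And>j. j < length \<sigma> \<Longrightarrow> drop j \<sigma> \<in> globset A" by (auto simp: globset_def)
    note G = this
    show "holds \<sigma> 0 (Glob \<phi>)"
    proof (simp, intro allI impI)
      fix j assume j: "j < length \<sigma>"
      from G[OF j] S have "holds (drop j \<sigma>) 0 \<phi>" by (auto simp: separates_def models_def)
      with j show "holds \<sigma> j \<phi>" by (simp add: holds_drop0)
    qed
  qed
  ultimately show ?case using S by (intro exI[of _ "Glob \<phi>"]) (auto simp: separates_def)
qed

lemma complete:
  "separates \<phi> A B \<Longrightarrow> \<forall>\<sigma>\<in>B. \<sigma> \<noteq> [] \<Longrightarrow> ded A B (fsize \<phi>)"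
proof (induction \<phi> arbitrary: A B)
  case (Lit p)
  then have "ded A B 1" by (intro ded.atomic[of "Lit p"]) (auto simp: separates_def is_literal_def)
  then show ?case by simp
next
  case (NLit p)
  then have "ded A B 1" by (intro ded.atomic[of "NLit p"]) (auto simp: separates_def is_literal_def)
  then show ?case by simp
next
  case (Or \<phi>1 \<phi>2)
  define A1 where "A1 = {\<sigma>\<in>A. holds \<sigma> 0 \<phi>1}"
  define A2 where "A2 = A - A1"
  have "ded A1 B (fsize \<phi>1)"
    using Or by (intro Or.IH(1)) (auto simp: A1_def separates_def models_def perp_def)
  moreover have "ded A2 B (fsize \<phi>2)"
    using Or by (intro Or.IH(2)) (auto simp: A1_def A2_def separates_def models_def perp_def)
  moreover have "A1 \<inter> A2 = {}" by (auto simp: A1_def A2_def)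
  ultimately have "ded (A1 \<union> A2) B (fsize \<phi>1 + fsize \<phi>2 + 1)" by (intro ded.orR)
  moreover have "A1 \<union> A2 = A" by (auto simp: A1_def A2_def)
  ultimately show ?case by simp
next
  case (And \<phi>1 \<phi>2)
  define B1 where "B1 = {\<sigma>\<in>B. \<not> holds \<sigma> 0 \<phi>1}"
  define B2 where "B2 = B - B1"
  have "ded A B1 (fsize \<phi>1)"
    using And by (intro And.IH(1)) (auto simp: B1_def separates_def models_def perp_def)
  moreover have "ded A B2 (fsize \<phi>2)"
    using And by (intro And.IH(2)) (auto simp: B1_def B2_def separates_def models_def perp_def)
  moreover have "B1 \<inter> B2 = {}" by (auto simp: B1_def B2_def)
  ultimately have "ded A (B1 \<union> B2) (fsize \<phi>1 + fsize \<phi>2 + 1)" by (intro ded.andR)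
  moreover have "B1 \<union> B2 = B" by (auto simp: B1_def B2_def)
  ultimately show ?case by simp
next
  case (Nxt \<phi>)
  have L: "\<forall>\<sigma>\<in>A. length \<sigma> \<ge> 2" using Nxt.prems by (auto simp: separates_def models_def)
  have "separates \<phi> (nextset A) (nextset B)"
    using Nxt.prems by (auto simp: separates_def models_def perp_def nextset_def holds_drop0)
  moreover have "\<forall>\<sigma>\<in>nextset B. \<sigma> \<noteq> []" by (auto simp: nextset_def)
  ultimately have "ded (nextset A) (nextset B) (fsize \<phi>)" using Nxt.IH by blast
  with L show ?case using ded.nextR by fastforce
next
  case (WNxt \<phi>)
  have L: "\<forall>\<sigma>\<in>B. length \<sigma> \<ge> 2"
  proof
    fix \<sigma> assume "\<sigma> \<in> B"
    with WNxt.prems have "\<sigma> \<noteq> []" "length \<sigma> \<noteq> 1" by (auto simp: separates_def perp_def)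
    then have "0 < length \<sigma>" "length \<sigma> \<noteq> 1" by auto
    then show "length \<sigma> \<ge> 2" by linarith
  qed
  have "separates \<phi> (nextset A) (nextset B)"
    using WNxt.prems by (auto simp: separates_def models_def perp_def nextset_def holds_drop0)
  moreover have "\<forall>\<sigma>\<in>nextset B. \<sigma> \<noteq> []" by (auto simp: nextset_def)
  ultimately have "ded (nextset A) (nextset B) (fsize \<phi>)" using WNxt.IH by blast
  with L show ?case using ded.wnext by fastforce
next
  case (Fut \<phi>)
  define f where "f = (\<lambda>\<sigma>. SOME j. j < length \<sigma> \<and> holds \<sigma> j \<phi>)"
  have F: "f \<sigma> < length \<sigma> \<and> holds \<sigma> (f \<sigma>) \<phi>" if "\<sigma> \<in> A" for \<sigma>
  proof -
    from that Fut.prems obtain j where "j < length \<sigma> \<and> holds \<sigma> j \<phi>"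
      by (auto simp: separates_def models_def)
    then show ?thesis unfolding f_def by (rule someI)
  qed
  have fp: "future_point f A" using F by (auto simp: future_point_def)
  have "separates \<phi> (futset A f) (globset B)"
    using Fut.prems F by (auto simp: separates_def models_def perp_def futset_def globset_def holds_drop0)
  moreover have "\<forall>\<sigma>\<in>globset B. \<sigma> \<noteq> []" by (auto simp: globset_def)
  ultimately have "ded (futset A f) (globset B) (fsize \<phi>)" using Fut.IH by blast
  with fp show ?case using ded.future by fastforce
next
  case (Glob \<phi>)
  define f where "f = (\<lambda>\<sigma>. SOME j. j < length \<sigma> \<and> \<not> holds \<sigma> j \<phi>)"
  have F: "f \<sigma> < length \<sigma> \<and> \<not> holds \<sigma> (f \<sigma>) \<phi>" if "\<sigma> \<in> B" for \<sigma>
  proof -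
    from that Glob.prems obtain j where "j < length \<sigma> \<and> \<not> holds \<sigma> j \<phi>"
      by (auto simp: separates_def perp_def)
    then show ?thesis unfolding f_def by (rule someI)
  qed
  have fp: "future_point f B" using F by (auto simp: future_point_def)
  have "separates \<phi> (globset A) (futset B f)"
    using Glob.prems F by (auto simp: separates_def models_def perp_def futset_def globset_def holds_drop0)
  moreover have "\<forall>\<sigma>\<in>futset B f. \<sigma> \<noteq> []" by (auto simp: futset_def dest!: F)
  ultimately have "ded (globset A) (futset B f) (fsize \<phi>)" using Glob.IH by blast
  with fp show ?case using ded.globally by fastforce
qed

theorem theorem3:
  fixes A B :: "('a::finite) set list set" and k :: nat
  assumes "\<forall>\<sigma>\<in>A. \<sigma> \<noteq> []" and "\<forall>\<sigma>\<in>B. \<sigma> \<noteq> []" and "k \<ge> 1"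
  shows "ded A B k \<longleftrightarrow> (\<exists>\<phi>. separates \<phi> A B \<and> fsize \<phi> = k)"
  using sound[OF _ assms(1,2)] complete[OF _ assms(2)] by blast

end
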